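(* Let $n\in\{3,4\}$, $\tau\in\widehat{SO_n}$ and $0\le\ell\le a_\tau$. Suppose that there exists a nontrivial $K$-equivariant polynomial $P:\mathbb R^n\to{\rm End}(V_\tau)$, homogeneous of degree $d$ and taking values in $\mathcal W^\ell_\tau$. Then $d\ge\ell\kappa$ and $d-\ell\kappa$ is even.
   Context: $K=SO_n$; a map $P:\mathbb R^n\to{\rm End}(V_\tau)$ is $K$-equivariant if $P(ky)=\tau(k)P(y)\tau(k)^{-1}$. ${\rm End}(V_\tau)$ carries the representation $\tilde\tau(k)A=\tau(k)A\tau(k)^{-1}$. Case $n=3$: $\widehat{SO_3}=\{\tau_\mu:\mu\in\mathbb N\}$, $\dim\tau_\mu=2\mu+1$; $a_\tau=2\mu$, $\kappa=1$; ${\rm End}(V_\tau)=\bigoplus_{\ell=0}^{2\mu}\mathcal W^\ell_\tau$ with $\mathcal W^\ell_\tau$ the (unique) $\tilde\tau$-invariant irreducible subspace equivalent to $\tau_\ell$. Case $n=4$: identify $\mathbb R^4=\mathbb H$, $SO_4\cong(SU_2\times SU_2)/\mathbb Z_2$ acting by $(u,v)\cdot y=uyv^{-1}$; $\widehat{SO_4}=\{\tau_{\nu,\mu}=\tau_\nu\boxtimes\tau_\mu:\nu,\mu\in\frac12\mathbb N,\nu+\mu\in\mathbb N\}$, $\tau_\nu$ the $(2\nu+1)$-dimensional irreducible representation of $SU_2$; $a_\tau=2\min(\mu,\nu)$, $\kappa=2$; ${\rm End}(V_\tau)={\rm End}(V_{\tau_\nu})\otimes{\rm End}(V_{\tau_\mu})$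 and $\mathcal W^\ell_\tau=\mathcal W^\ell_{\tau_\nu}\otimes\mathcal W^\ell_{\tau_\mu}$, where $\mathcal W^\ell_{\tau_\nu}\subset{\rm End}(V_{\tau_\nu})$ is the conjugation-invariant irreducible subspace equivalent to $\tau_\ell$. *)

theory Defs
  imports "HOL-Analysis.Analysis" "HOL-Computational_Algebra.Polynomial"
begin

text \<open>The quaternion (a,b) stands for the complex 2x2 matrix [[a, -cnj b],[b, cnj a]].
  Unit quaternions form SU2.\<close>

type_synonym quat = "complex \<times> complex"

definition qmul :: "quat \<Rightarrow> quat \<Rightarrow> quat" where
  "qmul p q = (case p of (a,b) \<Rightarrow> case q of (c,d) \<Rightarrow> (a*c - cnj b * d, b*c + cnj a * d))"

definition qcnj :: "quat \<Rightarrow> quat" where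
  "qcnj p = (case p of (a,b) \<Rightarrow> (cnj a, - b))"

definition SU2 :: "quat set" where
  "SU2 = {(a,b). (cmod a)\<^sup>2 + (cmod b)\<^sup>2 = 1}"

definition of_R4 :: "real^4 \<Rightarrow> quat" where
  "of_R4 y = (Complex (y$1) (y$2), Complex (y$3) (y$4))"

definition to_R4 :: "quat \<Rightarrow> real^4" where
  "to_R4 q = (case q of (a,b) \<Rightarrow> vector [Re a, Im a, Re b, Im b])"

definition of_R3 :: "real^3 \<Rightarrow> quat" where
  "of_R3 y = (Complex 0 (y$1), Complex (y$2) (y$3))"

definition to_R3 :: "quat \<Rightarrow> real^3" where
  "to_R3 q = (case q of (a,b) \<Rightarrow> vector [Im a, Re b, Im b])"

text \<open>SO3 = SU2/{+-1} acting on R^3 = Im H by u y u^-1;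
  SO4 = (SU2 x SU2)/Z2 acting on R^4 = H by u y v^-1.\<close>

definition rot3 :: "quat \<Rightarrow> real^3 \<Rightarrow> real^3" where
  "rot3 u y = to_R3 (qmul (qmul u (of_R3 y)) (qcnj u))"

definition rot4 :: "quat \<Rightarrow> quat \<Rightarrow> real^4 \<Rightarrow> real^4" where
  "rot4 u v y = to_R4 (qmul (qmul u (of_R4 y)) (qcnj v))"

text \<open>spin m is the (m+1)-dimensional irreducible representation of SU2 (tau_(m/2)),
  realized on binary forms f(z1,z2) = sum_k p_k z1^k z2^(m-k) of degree m by
  (g.f)(z) = f(g^T z); matrix w.r.t. the monomial basis, indices 0..m.\<close>

definition spin :: "nat \<Rightarrow> quat \<Rightarrow> nat \<Rightarrow> nat \<Rightarrow> complex" where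
  "spin m g = (case g of (a,b) \<Rightarrow> (\<lambda>j k. if j \<le> m \<and> k \<le> m
       then coeff ([:b, a:] ^ k * [:cnj a, - cnj b:] ^ (m - k)) j else 0))"

definition mmul :: "'i set \<Rightarrow> ('i \<Rightarrow> 'i \<Rightarrow> complex) \<Rightarrow> ('i \<Rightarrow> 'i \<Rightarrow> complex) \<Rightarrow> 'i \<Rightarrow> 'i \<Rightarrow> complex" where
  "mmul I A B = (\<lambda>i j. \<Sum>k\<in>I. A i k * B k j)"

definition mvmul :: "'i set \<Rightarrow> ('i \<Rightarrow> 'i \<Rightarrow> complex) \<Rightarrow> ('i \<Rightarrow> complex) \<Rightarrow> 'i \<Rightarrow> complex" where
  "mvmul I A x = (\<lambda>i. \<Sum>k\<in>I. A i k * x k)"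

text \<open>V_(m/2) = vectors supported in {0..m}; End over index set I.\<close>

definition Vsp :: "nat \<Rightarrow> (nat \<Rightarrow> complex) set" where
  "Vsp m = {x. \<forall>i. m < i \<longrightarrow> x i = 0}"

definition endsp :: "'i set \<Rightarrow> ('i \<Rightarrow> 'i \<Rightarrow> complex) set" where
  "endsp I = {M. \<forall>i j. i \<notin> I \<or> j \<notin> I \<longrightarrow> M i j = 0}"

definition conjS :: "nat \<Rightarrow> quat \<Rightarrow> (nat \<Rightarrow> nat \<Rightarrow> complex) \<Rightarrow> nat \<Rightarrow> nat \<Rightarrow> complex" where
  "conjS m g M = mmul {..m} (mmul {..m} (spin m g) M) (spin m (qcnj g))"

text \<open>W is a conjugation-invariant subspace of End(V_(m/2)) equivalent to tau_l
  (the (2l+1)-dimensional representation): there is a complex-linear bijective intertwiner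
  from V_l onto W.\<close>

definition Wl_sub :: "nat \<Rightarrow> nat \<Rightarrow> (nat \<Rightarrow> nat \<Rightarrow> complex) set \<Rightarrow> bool" where
  "Wl_sub m l W \<longleftrightarrow> W \<subseteq> endsp {..m} \<and>
     (\<exists>T. bij_betw T (Vsp (2*l)) W \<and>
        (\<forall>x\<in>Vsp (2*l). \<forall>y\<in>Vsp (2*l). T (\<lambda>i. x i + y i) = (\<lambda>p q. T x p q + T y p q)) \<and>
        (\<forall>c. \<forall>x\<in>Vsp (2*l). T (\<lambda>i. c * x i) = (\<lambda>p q. c * T x p q)) \<and>
        (\<forall>g\<in>SU2. \<forall>x\<in>Vsp (2*l). T (mvmul {..2*l} (spin (2*l) g) x) = conjS m g (T x)))"

definition tens :: "('a \<Rightarrow> 'a \<Rightarrow> complex) \<Rightarrow> ('b \<Rightarrow> 'b \<Rightarrow> complex) \<Rightarrow> ('a \<times> 'b) \<Rightarrow> ('a \<times> 'b) \<Rightarrow> complex" where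
  "tens A B = (\<lambda>(i,k) (j,l). A i j * B k l)"

definition tspan :: "('a \<Rightarrow> 'a \<Rightarrow> complex) set \<Rightarrow> ('b \<Rightarrow> 'b \<Rightarrow> complex) set \<Rightarrow> (('a \<times> 'b) \<Rightarrow> ('a \<times> 'b) \<Rightarrow> complex) set" where
  "tspan W1 W2 = {M. \<exists>(N::nat) A B. (\<forall>t<N. A t \<in> W1 \<and> B t \<in> W2) \<and>
      M = (\<lambda>p q. \<Sum>t<N. tens (A t) (B t) p q)}"

definition conjT :: "nat \<Rightarrow> nat \<Rightarrow> quat \<Rightarrow> quat \<Rightarrow> (nat\<times>nat \<Rightarrow> nat\<times>nat \<Rightarrow> complex) \<Rightarrow> nat\<times>nat \<Rightarrow> nat\<times>nat \<Rightarrow> complex" where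
  "conjT m1 m2 u v M = mmul ({..m1} \<times> {..m2})
      (mmul ({..m1} \<times> {..m2}) (tens (spin m1 u) (spin m2 v)) M)
      (tens (spin m1 (qcnj u)) (spin m2 (qcnj v)))"

definition hom_poly :: "nat \<Rightarrow> (real^'n \<Rightarrow> 'i \<Rightarrow> 'j \<Rightarrow> complex) \<Rightarrow> bool" where
  "hom_poly d P \<longleftrightarrow> (\<exists>c. \<forall>y i j. P y i j =
     (\<Sum>\<alpha>\<in>{\<alpha>::'n \<Rightarrow> nat. sum \<alpha> UNIV = d}. c \<alpha> i j * (\<Prod>k\<in>UNIV. complex_of_real (y$k) ^ \<alpha> k)))"

end

theory Submission
  imports Defs
begin

lemma coeff_mult_top:
  fixes p q :: "'a::comm_semiring_1 poly"
  assumes "degree p \<le> n" "degree q \<le> m"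
  shows "coeff (p*q) (n+m) = coeff p n * coeff q m"
proof -
  have "coeff (p*q) (n+m) = (\<Sum>i\<le>n+m. coeff p i * coeff q (n + m - i))"
    by (rule coeff_mult)
  also have "\<dots> = (\<Sum>i\<in>{n}. coeff p i * coeff q (n + m - i))"
  proof (rule sum.mono_neutral_right)
    show "\<forall>i\<in>{..n + m} - {n}. coeff p i * coeff q (n + m - i) = 0"
    proof
      fix i assume "i \<in> {..n + m} - {n}"
      then have "i < n \<or> i > n" by auto
      then show "coeff p i * coeff q (n + m - i) = 0"
      proof
        assume "i < n" then have "n + m - i > m" by auto
        then have "coeff q (n+m-i) = 0" using assms(2) by (simp add: coeff_eq_0)
        then show ?thesis by simp
      next
        assume "i > n" then have "coeff p i = 0" using assms(1) by (simp add: coeff_eq_0)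
        then show ?thesis by simp
      qed
    qed
  qed auto
  finally show ?thesis by simp
qed

lemma coeff_pow_top:
  fixes p :: "'a::comm_semiring_1 poly"
  assumes "degree p \<le> 1"
  shows "coeff (p^k) k = coeff p 1 ^ k"
proof (induction k)
  case 0 then show ?case by simp
next
  case (Suc k)
  have "degree (p^k) \<le> k"
    by (rule order_trans[OF degree_power_le]) (use assms in simp)
  then have "coeff (p * p^k) (1 + k) = coeff p 1 * coeff (p^k) k"
    using coeff_mult_top[OF assms] by blast
  then show ?case using Suc by simp
qed

lemma spin_top:
  assumes "k \<le> m"
  shows "spin m (a,b) m k = a^k * (- cnj b)^(m-k)"
proof -
  have d1: "degree ([:b, a:] ^ k) \<le> k"
    by (rule order_trans[OF degree_power_le]) simp
  have d2: "degree ([:cnj a, - cnj b:] ^ (m-k)) \<le> m - k"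
    by (rule order_trans[OF degree_power_le]) simp
  have "coeff ([:b, a:] ^ k * [:cnj a, - cnj b:] ^ (m - k)) (k + (m-k))
       = coeff ([:b, a:] ^ k) k * coeff ([:cnj a, - cnj b:] ^ (m - k)) (m-k)"
    by (rule coeff_mult_top[OF d1 d2])
  also have "\<dots> = a^k * (- cnj b)^(m-k)"
    by (subst coeff_pow_top, simp, subst coeff_pow_top, simp, simp)
  finally show ?thesis using assms by (simp add: spin_def)
qed

lemma cpow: "[:c:]^n = [:(c::'a::comm_semiring_1)^n:]"
  by (induction n) (auto simp: mult_to_poly mult.commute)

lemma spin_diag:
  "spin m (a,0) j k = (if j = k \<and> k \<le> m then a^k * cnj a^(m-k) else 0)"
proof -
  have m1: "[:0, a:] = monom a 1" by (simp add: monom_Suc monom_0 One_nat_def)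
  have "[:0, a:] ^ k = monom (a^k) k" unfolding m1 monom_power by simp
  moreover have "[:cnj a, - cnj 0:] ^ (m-k) = [:cnj a ^ (m-k):]"
    by (simp add: cpow)
  ultimately have "[:0, a:] ^ k * [:cnj a, - cnj 0:] ^ (m-k) = monom (a^k * cnj a ^ (m-k)) k"
    by (simp add: mult.commute smult_monom)
  then show ?thesis
    by (simp add: spin_def coeff_monom)
qed

definition ev :: "nat \<Rightarrow> nat \<Rightarrow> complex" where
  "ev k = (\<lambda>i. if i = k then 1 else 0)"

definition tlin :: "nat \<Rightarrow> ((nat \<Rightarrow> complex) \<Rightarrow> 'a \<Rightarrow> 'b \<Rightarrow> complex) \<Rightarrow> bool" where
  "tlin m T \<longleftrightarrow> (\<forall>x\<in>Vsp m. \<forall>y\<in>Vsp m. T (\<lambda>i. x i + y i) = (\<lambda>p q. T x p q + T y p q)) \<and>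
        (\<forall>c. \<forall>x\<in>Vsp m. T (\<lambda>i. c * x i) = (\<lambda>p q. c * T x p q))"

lemma ev_Vsp: "k \<le> m \<Longrightarrow> ev k \<in> Vsp m"
  by (auto simp: ev_def Vsp_def)

lemma zero_Vsp: "(\<lambda>i. 0) \<in> Vsp m" by (simp add: Vsp_def)

lemma T_zero: "tlin m T \<Longrightarrow> T (\<lambda>i. 0) = (\<lambda>p q. 0)"
proof -
  assume T: "tlin m T"
  have h: "\<forall>c. \<forall>x\<in>Vsp m. T (\<lambda>i. c * x i) = (\<lambda>p q. c * T x p q)"
    using T unfolding tlin_def by blast
  show ?thesis using h[rule_format, of "\<lambda>i. 0" 0] zero_Vsp[of m] by simp
qed

lemma T_smul: "tlin m T \<Longrightarrow> x \<in> Vsp m \<Longrightarrow> T (\<lambda>i. c * x i) = (\<lambda>p q. c * T x p q)"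
  unfolding tlin_def by blast

lemma Vsp_smul: "x \<in> Vsp m \<Longrightarrow> (\<lambda>i. c * x i) \<in> Vsp m" by (simp add: Vsp_def)

lemma Vsp_sum: "(\<forall>j\<in>F. f j \<in> Vsp m) \<Longrightarrow> (\<lambda>i. \<Sum>j\<in>F. f j i) \<in> Vsp m"
  by (simp add: Vsp_def)

lemma T_sum:
  assumes T: "tlin m T" and F: "finite F"
  shows "(\<forall>j\<in>F. f j \<in> Vsp m) \<longrightarrow> T (\<lambda>i. \<Sum>j\<in>F. f j i) = (\<lambda>p q. \<Sum>j\<in>F. T (f j) p q)"
  using F
proof (induction F rule: finite_induct)
  case empty
  then show ?case using T_zero[OF T] by simp
next
  case (insert x F)
  show ?case
  proof
    assume h: "\<forall>j\<in>insert x F. f j \<in> Vsp m"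
    have s: "(\<lambda>i. \<Sum>j\<in>F. f j i) \<in> Vsp m" using h Vsp_sum[of F f m] by auto
    have "T (\<lambda>i. \<Sum>j\<in>insert x F. f j i) = T (\<lambda>i. f x i + (\<Sum>j\<in>F. f j i))"
      using insert by simp
    also have "\<dots> = (\<lambda>p q. T (f x) p q + T (\<lambda>i. \<Sum>j\<in>F. f j i) p q)"
      using T h s unfolding tlin_def by auto
    also have "\<dots> = (\<lambda>p q. \<Sum>j\<in>insert x F. T (f j) p q)"
      using insert h by simp
    finally show "T (\<lambda>i. \<Sum>j\<in>insert x F. f j i) = (\<lambda>p q. \<Sum>j\<in>insert x F. T (f j) p q)" .
  qed
qed

lemma Vsp_expand: "x \<in> Vsp m \<Longrightarrow> x = (\<lambda>i. \<Sum>k\<le>m. x k * ev k i)"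
proof
  fix i assume x: "x \<in> Vsp m"
  show "x i = (\<Sum>k\<le>m. x k * ev k i)"
  proof (cases "i \<le> m")
    case True
    have "(\<Sum>k\<le>m. x k * ev k i) = (\<Sum>k\<le>m. if k = i then x i else 0)"
      by (rule sum.cong) (auto simp: ev_def)
    also have "\<dots> = x i" using True by simp
    finally show ?thesis by simp
  next
    case False
    then show ?thesis using x by (auto simp: ev_def Vsp_def)
  qed
qed

lemma T_expand:
  assumes T: "tlin m T" and x: "x \<in> Vsp m"
  shows "T x = (\<lambda>p q. \<Sum>k\<le>m. x k * T (ev k) p q)"
proof -
  have "T x = T (\<lambda>i. \<Sum>k\<le>m. x k * ev k i)" using Vsp_expand[OF x] by simp
  also have "\<dots> = (\<lambda>p q. \<Sum>k\<le>m. T (\<lambda>i. x k * ev k i) p q)"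
    using T_sum[OF T, of "{..m}" "\<lambda>k i. x k * ev k i"] ev_Vsp Vsp_smul by auto
  also have "\<dots> = (\<lambda>p q. \<Sum>k\<le>m. x k * T (ev k) p q)"
    using T_smul[OF T] ev_Vsp by simp
  finally show ?thesis .
qed

lemma T_zero_iff:
  assumes T: "tlin m T" and inj: "inj_on T (Vsp m)" and x: "x \<in> Vsp m"
  shows "T x = (\<lambda>p q. 0) \<longleftrightarrow> x = (\<lambda>i. 0)"
proof
  assume "T x = (\<lambda>p q. 0)"
  then have "T x = T (\<lambda>i. 0)" using T_zero[OF T] by simp
  then show "x = (\<lambda>i. 0)" using inj x zero_Vsp[of m] unfolding inj_on_def by blast
next
  assume "x = (\<lambda>i. 0)" then show "T x = (\<lambda>p q. 0)" using T_zero[OF T] by simp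
qed

lemma mvmul_Vsp: "mvmul {..m} (spin m g) x \<in> Vsp m"
  by (auto simp: Vsp_def mvmul_def spin_def split: prod.splits)

definition good :: "nat \<Rightarrow> nat \<Rightarrow> complex poly \<Rightarrow> bool" where
  "good s D R \<longleftrightarrow> (\<forall>n. coeff R n \<noteq> 0 \<longrightarrow> s dvd n \<and> n \<le> s * D)"

lemma good_mult:
  assumes "good s D1 p" "good s D2 q"
  shows "good s (D1 + D2) (p * q)"
  unfolding good_def
proof (intro allI impI)
  fix n assume "coeff (p*q) n \<noteq> 0"
  then have "(\<Sum>i\<le>n. coeff p i * coeff q (n - i)) \<noteq> 0" by (simp add: coeff_mult)
  then obtain i where i: "i \<le> n" "coeff p i * coeff q (n - i) \<noteq> 0"
    by (meson atMost_iff sum.neutral)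
  then have "s dvd i \<and> i \<le> s * D1" "s dvd (n-i) \<and> n - i \<le> s * D2"
    using assms unfolding good_def by auto
  then show "s dvd n \<and> n \<le> s * (D1 + D2)" using i(1)
    by (metis add_mono distrib_left dvd_add le_add_diff_inverse)
qed

lemma good_one: "good s 0 1"
  by (simp add: good_def coeff_1)

lemma good_mono: "good s D p \<Longrightarrow> D \<le> D' \<Longrightarrow> good s D' p"
  unfolding good_def by (meson le_trans mult_le_mono2)

lemma good_power: "good s D p \<Longrightarrow> good s (D * k) (p ^ k)"
proof (induction k)
  case 0 then show ?case by (simp add: good_one)
next
  case (Suc k)
  then have "good s (D + D * k) (p * p ^ k)" using good_mult by blast
  then show ?case by (simp add: mult.commute)
qed

lemma good_prod:
  assumes "finite A" shows "(\<forall>x\<in>A. good s (D x) (f x)) \<longrightarrow> good s (\<Sum>x\<in>A. D x) (\<Prod>x\<in>A. f x)"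
  using assms
proof (induction A rule: finite_induct)
  case empty then show ?case by (simp add: good_one)
next
  case (insert x F) then show ?case by (simp add: good_mult)
qed

lemma good_sum: "(\<forall>x\<in>A. good s D (f x)) \<Longrightarrow> good s D (\<Sum>x\<in>A. f x)"
  unfolding good_def
proof (intro allI impI)
  fix n assume h: "\<forall>x\<in>A. \<forall>n. coeff (f x) n \<noteq> 0 \<longrightarrow> s dvd n \<and> n \<le> s * D"
    and c: "coeff (sum f A) n \<noteq> 0"
  then have "(\<Sum>x\<in>A. coeff (f x) n) \<noteq> 0" by (simp add: coeff_sum)
  then obtain x where "x \<in> A" "coeff (f x) n \<noteq> 0" by (meson sum.neutral)
  then show "s dvd n \<and> n \<le> s * D" using h by blast
qed

lemma good_smult: "good s D p \<Longrightarrow> good s D (smult c p)"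
  unfolding good_def by simp

lemma good_lin: "good s 1 (monom x 0 + monom y s)"
  unfolding good_def by (auto simp: coeff_monom split: if_splits)

lemma good_zero: "good s D 0" unfolding good_def by simp

lemma infinite_circle: "infinite {a::complex. cmod a = 1}"
proof
  assume fin: "finite {a::complex. cmod a = 1}"
  let ?f = "\<lambda>x::real. Complex x (sqrt (1 - x^2))"
  have inj: "inj_on ?f {0..1}" by (auto simp: inj_on_def)
  have "?f ` {0..1} \<subseteq> {a. cmod a = 1}"
  proof
    fix z assume "z \<in> ?f ` {0..1::real}"
    then obtain x where x: "x \<in> {0..1}" "z = ?f x" by blast
    then have "x^2 \<le> 1" by (simp add: power_le_one)
    then show "z \<in> {a. cmod a = 1}" using x by (simp add: complex_norm)
  qed
  then have "finite (?f ` {0..1})" using fin finite_subset by blast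
  then have "finite {0..1::real}" using finite_imageD inj by blast
  then show False using infinite_Icc[of "0::real" 1] by simp
qed

lemma freq:
  fixes R :: "complex poly" and w :: "nat \<Rightarrow> complex"
  assumes eq: "\<forall>a. cmod a = 1 \<longrightarrow> a^p * poly R a = a^q * (\<Sum>j\<le>K. w j * a^(2*j))"
    and g: "good s D R" and w: "w K \<noteq> 0"
  shows "p \<le> q + 2*K \<and> s dvd (q + 2*K - p) \<and> q + 2*K - p \<le> s*D"
proof -
  define A where "A = monom 1 p * R"
  define B where "B = monom 1 q * (\<Sum>j\<le>K. monom (w j) (2*j))"
  have z: "poly (A - B) a = 0" if "cmod a = 1" for a
    using eq that by (simp add: A_def B_def poly_monom poly_sum mult.commute)
  have "A - B = 0"
  proof (rule ccontr)
    assume "A - B \<noteq> 0"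
    then have "finite {a. poly (A - B) a = 0}" by (rule poly_roots_finite)
    moreover have "{a::complex. cmod a = 1} \<subseteq> {a. poly (A - B) a = 0}" using z by auto
    ultimately show False using infinite_circle finite_subset by blast
  qed
  then have AB: "coeff A (q + 2*K) = coeff B (q + 2*K)" by simp
  have "coeff B (q + 2*K) = (\<Sum>j\<le>K. coeff (monom (w j) (2*j)) (2*K))"
    by (simp add: B_def coeff_monom_mult coeff_sum)
  also have "\<dots> = (\<Sum>j\<le>K. if j = K then w K else 0)"
    by (rule sum.cong) (auto simp: coeff_monom)
  also have "\<dots> = w K" by simp
  finally have "coeff A (q + 2*K) \<noteq> 0" using AB w by simp
  then have "\<not> q + 2*K < p" "coeff R (q + 2*K - p) \<noteq> 0"
    by (auto simp: A_def coeff_monom_mult split: if_splits)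
  then show ?thesis using g unfolding good_def by auto
qed

lemma hom_scale:
  fixes P :: "real^'n \<Rightarrow> 'i \<Rightarrow> 'j \<Rightarrow> complex"
  assumes "hom_poly d P"
  shows "P (r *\<^sub>R y) = (\<lambda>i j. complex_of_real r ^ d * P y i j)"
proof -
  obtain c where c: "\<And>y i j. P y i j =
     (\<Sum>\<alpha>\<in>{\<alpha>::'n \<Rightarrow> nat. sum \<alpha> UNIV = d}. c \<alpha> i j * (\<Prod>k\<in>UNIV. complex_of_real (y$k) ^ \<alpha> k))"
    using assms unfolding hom_poly_def by blast
  have pr: "(\<Prod>k\<in>UNIV. complex_of_real ((r *\<^sub>R y)$k) ^ \<alpha> k)
      = complex_of_real r ^ d * (\<Prod>k\<in>UNIV. complex_of_real (y$k) ^ \<alpha> k)"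
    if "\<alpha> \<in> {\<alpha>::'n \<Rightarrow> nat. sum \<alpha> UNIV = d}" for \<alpha>
  proof -
    have "(\<Prod>k\<in>UNIV. complex_of_real ((r *\<^sub>R y)$k) ^ \<alpha> k)
        = (\<Prod>k\<in>UNIV. complex_of_real r ^ \<alpha> k * complex_of_real (y$k) ^ \<alpha> k)"
      by (simp add: power_mult_distrib)
    also have "\<dots> = (\<Prod>k\<in>UNIV. complex_of_real r ^ \<alpha> k) * (\<Prod>k\<in>UNIV. complex_of_real (y$k) ^ \<alpha> k)"
      by (rule prod.distrib)
    also have "(\<Prod>k\<in>UNIV. complex_of_real r ^ \<alpha> k) = complex_of_real r ^ d"
      using that by (simp add: power_sum[symmetric])
    finally show ?thesis .
  qed
  show ?thesis
  proof (rule ext, rule ext)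
    fix i j
    have "P (r *\<^sub>R y) i j = (\<Sum>\<alpha>\<in>{\<alpha>::'n \<Rightarrow> nat. sum \<alpha> UNIV = d}. c \<alpha> i j * (\<Prod>k\<in>UNIV. complex_of_real ((r *\<^sub>R y)$k) ^ \<alpha> k))"
      by (rule c)
    also have "\<dots> = (\<Sum>\<alpha>\<in>{\<alpha>::'n \<Rightarrow> nat. sum \<alpha> UNIV = d}. c \<alpha> i j * (complex_of_real r ^ d * (\<Prod>k\<in>UNIV. complex_of_real (y$k) ^ \<alpha> k)))"
      by (rule sum.cong[OF refl]) (simp only: pr)
    also have "\<dots> = complex_of_real r ^ d * P y i j"
      by (subst c) (simp add: sum_distrib_left mult.left_commute)
    finally show "P (r *\<^sub>R y) i j = complex_of_real r ^ d * P y i j" .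
  qed
qed

lemma hom_polyR:
  fixes P :: "real^'n \<Rightarrow> 'i \<Rightarrow> 'j \<Rightarrow> complex" and L :: "'n \<Rightarrow> complex poly"
  assumes "hom_poly d P" and gL: "\<forall>k. good s 1 (L k)"
  shows "\<exists>R. good s d R \<and> (\<forall>a y. (\<forall>k. a^e * complex_of_real (y$k) = poly (L k) a)
              \<longrightarrow> a^(e*d) * P y i j = poly R a)"
proof -
  obtain c where c: "\<And>y i j. P y i j =
     (\<Sum>\<alpha>\<in>{\<alpha>::'n \<Rightarrow> nat. sum \<alpha> UNIV = d}. c \<alpha> i j * (\<Prod>k\<in>UNIV. complex_of_real (y$k) ^ \<alpha> k))"
    using assms unfolding hom_poly_def by blast
  define S where "S = {\<alpha>::'n \<Rightarrow> nat. sum \<alpha> UNIV = d}"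
  define R where "R = (\<Sum>\<alpha>\<in>S. smult (c \<alpha> i j) (\<Prod>k\<in>UNIV. L k ^ \<alpha> k))"
  have "good s d R"
    unfolding R_def
  proof (rule good_sum, rule ballI, rule good_smult)
    fix \<alpha> assume "\<alpha> \<in> S"
    then have "(\<Sum>k\<in>UNIV. 1 * \<alpha> k) = d" by (simp add: S_def)
    moreover have "good s (\<Sum>k\<in>UNIV. 1 * \<alpha> k) (\<Prod>k\<in>UNIV. L k ^ \<alpha> k)"
    proof -
      have "\<forall>k\<in>UNIV. good s (1 * \<alpha> k) (L k ^ \<alpha> k)" using good_power gL by blast
      then show ?thesis using good_prod[OF finite_class.finite_UNIV, of s "\<lambda>k. 1 * \<alpha> k" "\<lambda>k. L k ^ \<alpha> k"] by blast
    qed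
    ultimately show "good s d (\<Prod>k\<in>UNIV. L k ^ \<alpha> k)" by simp
  qed
  moreover have "a^(e*d) * P y i j = poly R a"
    if h: "\<forall>k. a^e * complex_of_real (y$k) = poly (L k) a" for a y
  proof -
    have t: "a^(e*d) * (\<Prod>k\<in>UNIV. complex_of_real (y$k) ^ \<alpha> k) = poly (\<Prod>k\<in>UNIV. L k ^ \<alpha> k) a"
      if "\<alpha> \<in> S" for \<alpha>
    proof -
      have "a^(e*d) = (\<Prod>k\<in>UNIV. (a^e) ^ \<alpha> k)"
        using that power_sum[of "a^e" \<alpha> UNIV] by (simp add: S_def power_mult)
      then have "a^(e*d) * (\<Prod>k\<in>UNIV. complex_of_real (y$k) ^ \<alpha> k)
          = (\<Prod>k\<in>UNIV. (a^e * complex_of_real (y$k)) ^ \<alpha> k)"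
        by (simp add: prod.distrib power_mult_distrib)
      also have "\<dots> = poly (\<Prod>k\<in>UNIV. L k ^ \<alpha> k) a"
        using h by (simp add: poly_prod)
      finally show ?thesis .
    qed
    have "a^(e*d) * P y i j = (\<Sum>\<alpha>\<in>S. c \<alpha> i j * (a^(e*d) * (\<Prod>k\<in>UNIV. complex_of_real (y$k) ^ \<alpha> k)))"
      by (subst c) (simp add: S_def sum_distrib_left mult.left_commute)
    also have "\<dots> = (\<Sum>\<alpha>\<in>S. c \<alpha> i j * poly (\<Prod>k\<in>UNIV. L k ^ \<alpha> k) a)"
      using t by simp
    also have "\<dots> = poly R a" by (simp add: R_def poly_sum)
    finally show ?thesis .
  qed
  ultimately show ?thesis by blast
qed

lemma unit_cnj: "cmod a = 1 \<Longrightarrow> a * cnj a = 1"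
  using complex_norm_square[of a] by simp

lemma SU2_iff: "(a,b) \<in> SU2 \<longleftrightarrow> (cmod a)\<^sup>2 + (cmod b)\<^sup>2 = 1"
  by (simp add: SU2_def)

lemma vec3_eq: "(x::real^3) = vector [a,b,c] \<longleftrightarrow> x$1 = a \<and> x$2 = b \<and> x$3 = c"
  by (simp add: vec_eq_iff forall_3 vector_3)

lemma rot3_torus_e:
  assumes "cmod a = 1"
  shows "rot3 (a,0) (vector [1,0,0]) = vector [1,0,0]"
proof -
  have "a * \<i> * cnj a = \<i>" using unit_cnj[OF assms] by (simp add: algebra_simps)
  have r: "Re a * Re a + Im a * Im a = 1" using cmod_power2[of a] assms by (simp add: power2_eq_square)
  then show ?thesis
    by (simp add: rot3_def qmul_def qcnj_def of_R3_def to_R3_def vector_3 vec3_eq algebra_simps)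
qed

lemma rot3_g1_e_gen:
  assumes "r * r = (1/2::real)"
  shows "rot3 (complex_of_real r, complex_of_real r) (vector [1,0,0]) = vector [0,0,1]"
proof -
  have rr: "complex_of_real r * complex_of_real r = 1/2" using assms
    by (metis of_real_mult of_real_divide of_real_1 of_real_numeral)
  have "qmul (qmul (complex_of_real r, complex_of_real r) (of_R3 (vector [1,0,0])))
          (qcnj (complex_of_real r, complex_of_real r)) = (0, \<i>)"
    by (simp add: qmul_def qcnj_def of_R3_def vector_3 Complex_eq algebra_simps rr)
  then show ?thesis by (simp add: rot3_def to_R3_def)
qed

lemma rot3_g1_e:
  "rot3 (complex_of_real (1/sqrt 2), complex_of_real (1/sqrt 2)) (vector [1,0,0]) = vector [0,0,1]"
  by (rule rot3_g1_e_gen) (simp add: power2_eq_square[symmetric] power_divide)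

lemma rot3_torus_y1:
  assumes "cmod a = 1"
  shows "rot3 (a,0) (vector [0,0,1]) = vector [0, Re (\<i> * cnj a ^ 2), Im (\<i> * cnj a ^ 2)]"
  by (simp add: rot3_def qmul_def qcnj_def of_R3_def to_R3_def vector_3 vec3_eq
         Complex_eq power2_eq_square algebra_simps)

lemma cmod_real2: "(cmod (complex_of_real r))^2 = r^2"
  by (simp only: norm_of_real power2_abs)

lemma g1_SU2: "(complex_of_real (1/sqrt 2), complex_of_real (1/sqrt 2)) \<in> SU2"
  unfolding SU2_iff cmod_real2 by (simp add: power_divide)

lemma torus_SU2: "cmod a = 1 \<Longrightarrow> (a,0) \<in> SU2"
  by (simp add: SU2_iff)

lemma norm3: "norm (x::real^3) = sqrt ((x$1)^2 + (x$2)^2 + (x$3)^2)"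
  by (simp add: norm_vec_def L2_set_def sum_3)

lemma transitive3:
  fixes u :: "real^3"
  assumes "norm u = 1"
  shows "\<exists>g\<in>SU2. rot3 g (vector [1,0,0]) = u"
proof -
  define u1 u2 u3 where "u1 = u$1" "u2 = u$2" "u3 = u$3"
  have "sqrt (u1^2 + u2^2 + u3^2) = 1" using assms norm3[of u] u1_u2_u3_def by simp
  then have n: "u1^2 + u2^2 + u3^2 = 1" by simp
  show ?thesis
  proof (cases "u1 = -1")
    case True
    then have "u2^2 + u3^2 = 0" using n by simp
    then have "u2 = 0" "u3 = 0" by (simp_all add: sum_power2_eq_zero_iff)
    then have "u = vector [-1,0,0]" using True u1_u2_u3_def by (simp add: vec3_eq)
    moreover have "rot3 (0,1) (vector [1,0,0]) = vector [-1,0,0]"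
      by (simp add: rot3_def qmul_def qcnj_def of_R3_def to_R3_def vector_3 vec3_eq)
    ultimately have "rot3 (0,1) (vector [1,0,0]) = u" by simp
    moreover have "(0::complex,1::complex) \<in> SU2" by (simp add: SU2_iff)
    ultimately show ?thesis by blast
  next
    case False
    have "0 \<le> u2^2" "0 \<le> u3^2" by simp_all
    then have "u1^2 \<le> 1" using n by linarith
    then have "\<bar>u1\<bar> \<le> 1" by (simp add: abs_square_le_1)
    then have u1p: "1 + u1 > 0" using False by linarith
    define A where "A = sqrt ((1 + u1)/2)"
    have A: "A > 0" "A^2 = (1+u1)/2" using u1p by (simp_all add: A_def)
    define b where "b = Complex u2 u3 / (2 * \<i> * complex_of_real A)"
    have cA: "cmod (2 * \<i> * complex_of_real A) = 2 * A" using A by (simp add: norm_mult)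
    have "cmod b = cmod (Complex u2 u3) / (2 * A)" unfolding b_def norm_divide cA ..
    then have "(cmod b)^2 = (u2^2 + u3^2) / (2*A)^2" by (simp add: power_divide complex_norm)
    also have "\<dots> = (1 - u1^2) / (2 * (1 + u1))"
    proof -
      have e1: "u2^2 + u3^2 = 1 - u1^2" using n by simp
      have e2: "(2*A)^2 = 2 * (1 + u1)" using A by (simp add: power_mult_distrib)
      show ?thesis unfolding e1 e2 ..
    qed
    also have "\<dots> = (1 - u1)/2" using u1p by (simp add: field_simps power2_eq_square)
    finally have nb: "(cmod b)^2 = (1 - u1)/2" .
    have g: "(complex_of_real A, b) \<in> SU2" using nb A unfolding SU2_iff cmod_real2 by simp
    have ab: "2 * \<i> * complex_of_real A * b = Complex u2 u3" using A by (simp add: b_def)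
    have bb: "cnj b * b = complex_of_real ((1 - u1)/2)"
      using complex_norm_square[of b] nb by (simp add: mult.commute)
    have AA: "complex_of_real A * complex_of_real A = complex_of_real ((1+u1)/2)"
    proof -
      have AA0: "A * A = (1+u1)/2" using A(2) by (simp add: power2_eq_square)
      show ?thesis unfolding of_real_mult[symmetric] AA0 ..
    qed
    have q1: "qmul (complex_of_real A, b) (of_R3 (vector [1,0,0])) = (complex_of_real A * \<i>, b * \<i>)"
      by (simp add: qmul_def of_R3_def vector_3 Complex_eq)
    have q2: "qmul (complex_of_real A * \<i>, b * \<i>) (qcnj (complex_of_real A, b))
        = (\<i> * (complex_of_real A * complex_of_real A - cnj b * b), 2 * \<i> * complex_of_real A * b)"
      by (simp add: qmul_def qcnj_def algebra_simps)
    have q3: "\<i> * (complex_of_real A * complex_of_real A - cnj b * b) = \<i> * complex_of_real u1"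
      unfolding AA bb by (simp add: field_simps)
    have "rot3 (complex_of_real A, b) (vector [1,0,0]) = to_R3 (\<i> * complex_of_real u1, Complex u2 u3)"
      unfolding rot3_def q1 q2 q3 ab ..
    also have "\<dots> = u" using u1_u2_u3_def by (simp add: to_R3_def vec_eq_iff forall_3 vector_3)
    finally show ?thesis using g by blast
  qed
qed

lemma mvmul_diag:
  assumes "k \<le> n"
  shows "mvmul {..n} (spin n (a,0)) z k = a^k * cnj a^(n-k) * z k"
proof -
  have "(\<Sum>j\<le>n. spin n (a,0) k j * z j) = (\<Sum>j\<le>n. if j = k then a^k * cnj a^(n-k) * z k else 0)"
    by (rule sum.cong) (auto simp: spin_diag)
  also have "\<dots> = a^k * cnj a^(n-k) * z k" using assms by simp
  finally show ?thesis by (simp add: mvmul_def)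
qed

lemma torus_pow:
  assumes "cmod a = 1" "k \<le> n"
  shows "a^n * (a^k * cnj a^(n-k)) = a^(2*k)"
proof -
  have "a^n = a^k * a^(n-k)" using assms(2) by (simp flip: power_add)
  then have "a^n * (a^k * cnj a^(n-k)) = a^k * a^k * (a * cnj a)^(n-k)"
    by (simp add: power_mult_distrib algebra_simps)
  also have "\<dots> = a^(2*k)" using unit_cnj[OF assms(1)] by (simp add: power_add[symmetric] mult_2)
  finally show ?thesis .
qed

lemma cis_pow_m1:
  assumes "k \<noteq> l" "k \<le> 2*l"
  shows "cis (pi / (2 * real k - 2 * real l)) ^ k * cnj (cis (pi / (2 * real k - 2 * real l))) ^ (2*l - k) = -1"
proof -
  define t where "t = pi / (2 * real k - 2 * real l)"
  have nz: "2 * real k - 2 * real l \<noteq> 0" using assms(1) by simp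
  have "cis t ^ k * cnj (cis t) ^ (2*l - k) = cis (real k * t) * cis (real (2*l-k) * (- t))"
    by (simp only: Complex.DeMoivre cis_cnj)
  also have "\<dots> = cis (real k * t + real (2*l-k) * (- t))" by (simp add: cis_mult)
  also have "real k * t + real (2*l-k) * (- t) = (2 * real k - 2 * real l) * t"
    using assms(2) by (simp add: of_nat_diff algebra_simps)
  also have "\<dots> = pi" using nz by (simp add: t_def)
  finally show ?thesis by (simp add: t_def)
qed

lemma Re_poly:
  assumes "cmod a = 1"
  shows "a^2 * complex_of_real (Re (\<i> * cnj a ^ 2)) = poly (monom (\<i>/2) 0 + monom (-\<i>/2) 4) a"
proof -
  define w where "w = \<i> * cnj a ^ 2"
  have h1: "complex_of_real (Re w) = (w + cnj w) / 2"
    using complex_add_cnj[of w] by (simp add: field_simps)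
  have h2: "a^2 * w = \<i>" using unit_cnj[OF assms]
    by (simp add: w_def power2_eq_square algebra_simps)
  have h3: "a^2 * cnj w = - \<i> * a^4" by (simp add: w_def power2_eq_square algebra_simps power4_eq_xxxx)
  have "a^2 * complex_of_real (Re w) = (a^2 * w + a^2 * cnj w) / 2"
    unfolding h1 by (simp add: algebra_simps add_divide_distrib)
  also have "\<dots> = (\<i> + - \<i> * a^4) / 2" unfolding h2 h3 ..
  also have "\<dots> = poly (monom (\<i>/2) 0 + monom (-\<i>/2) 4) a" by (simp add: poly_monom field_simps)
  finally show ?thesis unfolding w_def .
qed

lemma Im_poly:
  assumes "cmod a = 1"
  shows "a^2 * complex_of_real (Im (\<i> * cnj a ^ 2)) = poly (monom (1/2) 0 + monom (1/2) 4) a"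
proof -
  define w where "w = \<i> * cnj a ^ 2"
  have h1: "complex_of_real (Im w) = (w - cnj w) / (2 * \<i>)"
    using complex_diff_cnj[of w] by (simp add: field_simps)
  have h2: "a^2 * w = \<i>" using unit_cnj[OF assms]
    by (simp add: w_def power2_eq_square algebra_simps)
  have h3: "a^2 * cnj w = - \<i> * a^4" by (simp add: w_def power2_eq_square algebra_simps power4_eq_xxxx)
  have "a^2 * complex_of_real (Im w) = (a^2 * w - a^2 * cnj w) / (2 * \<i>)"
    unfolding h1 by (simp add: algebra_simps diff_divide_distrib)
  also have "\<dots> = (\<i> - - \<i> * a^4) / (2 * \<i>)" unfolding h2 h3 ..
  also have "\<dots> = poly (monom (1/2) 0 + monom (1/2) 4) a" by (simp add: poly_monom field_simps)
  finally show ?thesis unfolding w_def .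
qed

lemma conj0: "conjS m g (\<lambda>i j. 0) = (\<lambda>i j. 0)"
  by (simp add: conjS_def mmul_def)

lemma norm_e3: "norm (vector [1,0,0] :: real^3) = 1"
  by (simp add: norm3 vector_3)

lemma Wl_obtain:
  assumes "Wl_sub m l W"
  obtains T where "bij_betw T (Vsp (2*l)) W" "tlin (2*l) T"
    "\<forall>g\<in>SU2. \<forall>x\<in>Vsp (2*l). T (mvmul {..2*l} (spin (2*l) g) x) = conjS m g (T x)"
proof -
  from assms obtain T where a: "bij_betw T (Vsp (2*l)) W"
    and b: "\<forall>x\<in>Vsp (2*l). \<forall>y\<in>Vsp (2*l). T (\<lambda>i. x i + y i) = (\<lambda>p q. T x p q + T y p q)"
    and c: "\<forall>c. \<forall>x\<in>Vsp (2*l). T (\<lambda>i. c * x i) = (\<lambda>p q. c * T x p q)"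
    and d: "\<forall>g\<in>SU2. \<forall>x\<in>Vsp (2*l). T (mvmul {..2*l} (spin (2*l) g) x) = conjS m g (T x)"
    unfolding Wl_sub_def by blast
  have "tlin (2*l) T" unfolding tlin_def using b c by blast
  then show ?thesis using that a d by blast
qed

lemma case3:
  fixes P :: "real^3 \<Rightarrow> nat \<Rightarrow> nat \<Rightarrow> complex"
  assumes Wl: "Wl_sub m l W" and hp: "hom_poly d P" and nz: "\<exists>y. P y \<noteq> (\<lambda>i j. 0)"
    and inW: "\<forall>y. P y \<in> W" and eqv: "\<forall>u\<in>SU2. \<forall>y. P (rot3 u y) = conjS m u (P y)"
  shows "l \<le> d \<and> even (d - l)"
proof -
  define n where "n = 2*l"
  define e :: "real^3" where "e = vector [1,0,0]"
  obtain T where bij: "bij_betw T (Vsp n) W" and tl: "tlin n T"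
    and int: "\<forall>g\<in>SU2. \<forall>x\<in>Vsp n. T (mvmul {..n} (spin n g) x) = conjS m g (T x)"
    using Wl_obtain[OF Wl] unfolding n_def by blast
  have inj: "inj_on T (Vsp n)" using bij_betw_imp_inj_on[OF bij] .
  have img: "T ` Vsp n = W" using bij_betw_imp_surj_on[OF bij] .
  obtain y0 where y0: "P y0 \<noteq> (\<lambda>i j. 0)" using nz by blast
  define u where "u = (if y0 = 0 then e else (1 / norm y0) *\<^sub>R y0)"
  have nu: "norm u = 1" using norm_e3 by (simp add: u_def e_def)
  have "y0 = norm y0 *\<^sub>R u" by (simp add: u_def)
  then have "P y0 = (\<lambda>i j. complex_of_real (norm y0) ^ d * P u i j)"
    using hom_scale[OF hp, of "norm y0" u] by simp
  then have Pu: "P u \<noteq> (\<lambda>i j. 0)" using y0 by auto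
  obtain g where g: "g \<in> SU2" "rot3 g e = u" using transitive3[OF nu] e_def by blast
  have "P (rot3 g e) = conjS m g (P e)" using eqv g(1) by blast
  then have Pug: "P u = conjS m g (P e)" using g(2) by simp
  have Pe: "P e \<noteq> (\<lambda>i j. 0)"
  proof
    assume "P e = (\<lambda>i j. 0)"
    then have "P u = (\<lambda>i j. 0)" using Pug conj0 by simp
    then show False using Pu by simp
  qed
  have "P e \<in> T ` Vsp n" using img inW by simp
  then obtain x where x: "x \<in> Vsp n" "T x = P e" by (auto elim!: imageE)
  have xnz: "x \<noteq> (\<lambda>i. 0)" using Pe x T_zero[OF tl] by auto
  have xk: "x k = 0" if "k \<noteq> l" for k
  proof (cases "k \<le> n")
    case False then show ?thesis using x(1) by (simp add: Vsp_def)
  next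
    case True
    define a where "a = cis (pi / (2 * real k - 2 * real l))"
    have a1: "cmod a = 1" by (simp add: a_def)
    have aSU: "(a,0) \<in> SU2" by (rule torus_SU2[OF a1])
    have "T (mvmul {..n} (spin n (a,0)) x) = conjS m (a,0) (T x)" using int aSU x(1) by blast
    also have "\<dots> = P (rot3 (a,0) e)" using x(2) eqv aSU by simp
    also have "\<dots> = T x" using rot3_torus_e[OF a1] x(2) e_def by simp
    finally have "mvmul {..n} (spin n (a,0)) x = x"
      using inj x(1) mvmul_Vsp unfolding inj_on_def by blast
    then have "a^k * cnj a^(n-k) * x k = x k" using mvmul_diag[OF True, of a x] by simp
    moreover have "a^k * cnj a^(n-k) = -1" unfolding a_def n_def
      by (rule cis_pow_m1) (use that True n_def in auto)
    ultimately show "x k = 0" by simp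
  qed
  have xl: "x l \<noteq> 0"
  proof
    assume "x l = 0"
    have "x i = 0" for i using xk[of i] \<open>x l = 0\<close> by (cases "i = l") simp_all
    then have "x = (\<lambda>i. 0)" by (rule ext)
    then show False using xnz by simp
  qed
  define s where "s = complex_of_real (1/sqrt 2)"
  define g1 where "g1 = (s, s)"
  define y1 :: "real^3" where "y1 = vector [0,0,1]"
  define x' where "x' = mvmul {..n} (spin n g1) x"
  have g1SU: "g1 \<in> SU2" using g1_SU2 by (simp add: g1_def s_def)
  have x'V: "x' \<in> Vsp n" by (simp add: x'_def mvmul_Vsp)
  have "P y1 = P (rot3 g1 e)" using rot3_g1_e by (simp add: y1_def g1_def s_def e_def)
  also have "\<dots> = conjS m g1 (T x)" using eqv g1SU x(2) by simp
  also have "\<dots> = T x'" using int g1SU x(1) by (simp add: x'_def)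
  finally have Py1: "P y1 = T x'" .
  have x'top: "x' n \<noteq> 0"
  proof -
    have "x' n = (\<Sum>j\<le>n. spin n g1 n j * x j)" by (simp add: x'_def mvmul_def)
    also have "\<dots> = (\<Sum>j\<le>n. if j = l then spin n g1 n l * x l else 0)"
      by (rule sum.cong) (use xk in auto)
    also have "\<dots> = spin n g1 n l * x l" by (simp add: n_def)
    also have "\<dots> = s^l * (- cnj s)^(n-l) * x l" unfolding g1_def
      by (subst spin_top) (simp_all add: n_def)
    finally show ?thesis using xl by (simp add: s_def)
  qed
  define N where "N k = T (ev k)" for k
  have "N n \<noteq> (\<lambda>p q. 0)" unfolding N_def
    using T_zero_iff[OF tl inj ev_Vsp[of n n]] by (auto simp: ev_def fun_eq_iff)
  have "\<exists>p q. N n p q \<noteq> 0"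
  proof (rule ccontr)
    assume "\<not> (\<exists>p q. N n p q \<noteq> 0)"
    then have "N n = (\<lambda>p q. 0)" by (intro ext) simp
    then show False using \<open>N n \<noteq> (\<lambda>p q. 0)\<close> by simp
  qed
  then obtain p q where pq: "N n p q \<noteq> 0" by blast
  have key: "a^n * P (rot3 (a,0) y1) p q = (\<Sum>k\<le>n. (x' k * N k p q) * a^(2*k))"
    if a1: "cmod a = 1" for a
  proof -
    have aSU: "(a,0) \<in> SU2" by (rule torus_SU2[OF a1])
    have "P (rot3 (a,0) y1) = conjS m (a,0) (P y1)" using eqv aSU by blast
    also have "\<dots> = T (mvmul {..n} (spin n (a,0)) x')" using Py1 int aSU x'V by simp
    also have "\<dots> = (\<lambda>p q. \<Sum>k\<le>n. mvmul {..n} (spin n (a,0)) x' k * N k p q)"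
      unfolding N_def by (rule T_expand[OF tl mvmul_Vsp])
    finally have "a^n * P (rot3 (a,0) y1) p q = a^n * (\<Sum>k\<le>n. a^k * cnj a^(n-k) * x' k * N k p q)"
      using mvmul_diag by simp
    also have "\<dots> = (\<Sum>k\<le>n. (a^n * (a^k * cnj a^(n-k))) * x' k * N k p q)"
      by (simp add: sum_distrib_left mult.assoc)
    also have "\<dots> = (\<Sum>k\<le>n. (x' k * N k p q) * a^(2*k))"
    proof (rule sum.cong[OF refl])
      fix k assume "k \<in> {..n}"
      then have tp: "a^n * (a^k * cnj a^(n-k)) = a^(2*k)" using torus_pow[OF a1] by simp
      show "a^n * (a^k * cnj a^(n-k)) * x' k * N k p q = (x' k * N k p q) * a^(2*k)"
        unfolding tp by (simp only: ac_simps)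
    qed
    finally show ?thesis .
  qed
  define L :: "3 \<Rightarrow> complex poly" where "L k = (if k = 1 then 0 else if k = 2
      then monom (\<i>/2) 0 + monom (-\<i>/2) 4 else monom (1/2) 0 + monom (1/2) 4)" for k
  have gL: "\<forall>k. good 4 1 (L k)" using good_lin good_zero by (simp add: L_def)
  obtain R where R: "good 4 d R" "\<forall>a y. (\<forall>k. a^2 * complex_of_real (y$k) = poly (L k) a)
              \<longrightarrow> a^(2*d) * P y p q = poly R a"
    using hom_polyR[OF hp gL] by blast
  have Lk: "\<forall>k. a^2 * complex_of_real (rot3 (a,0) y1 $ k) = poly (L k) a" if a1: "cmod a = 1" for a
    unfolding forall_3 rot3_torus_y1[OF a1, folded y1_def] vector_3
    using Re_poly[OF a1] Im_poly[OF a1] by (simp add: L_def)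
  have "\<forall>a. cmod a = 1 \<longrightarrow> a^n * poly R a = a^(2*d) * (\<Sum>k\<le>n. (x' k * N k p q) * a^(2*k))"
  proof (intro allI impI)
    fix a :: complex assume a1: "cmod a = 1"
    have "a^n * poly R a = a^n * (a^(2*d) * P (rot3 (a,0) y1) p q)" using R(2) Lk[OF a1] by simp
    also have "\<dots> = a^(2*d) * (a^n * P (rot3 (a,0) y1) p q)" by (simp add: algebra_simps)
    also have "\<dots> = a^(2*d) * (\<Sum>k\<le>n. (x' k * N k p q) * a^(2*k))" using key[OF a1] by simp
    finally show "a^n * poly R a = a^(2*d) * (\<Sum>k\<le>n. (x' k * N k p q) * a^(2*k))" .
  qed
  from freq[OF this R(1)] have "n \<le> 2*d + 2*n \<and> 4 dvd (2*d + 2*n - n) \<and> 2*d + 2*n - n \<le> 4*d"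
    using x'top pq by simp
  then have "l \<le> d" "4 dvd (2*d + 2*l)" unfolding n_def by (auto simp: add.commute)
  then show ?thesis by presburger
qed

lemma tens_app: "tens A B p q = A (fst p) (fst q) * B (snd p) (snd q)"
  by (cases p, cases q) (simp add: tens_def)

lemma mmul_tens:
  "mmul (I \<times> J) (tens X1 X2) (tens Y1 Y2) = tens (mmul I X1 Y1) (mmul J X2 Y2)"
proof (intro ext)
  fix p q :: "'a \<times> 'b"
  have "mmul (I \<times> J) (tens X1 X2) (tens Y1 Y2) p q
      = (\<Sum>(k1,k2)\<in>I \<times> J. (X1 (fst p) k1 * Y1 k1 (fst q)) * (X2 (snd p) k2 * Y2 k2 (snd q)))"
    unfolding mmul_def by (rule sum.cong) (auto simp: tens_app)
  also have "\<dots> = (\<Sum>k1\<in>I. X1 (fst p) k1 * Y1 k1 (fst q)) * (\<Sum>k2\<in>J. X2 (snd p) k2 * Y2 k2 (snd q))"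
    by (simp add: sum_product sum.cartesian_product)
  also have "\<dots> = tens (mmul I X1 Y1) (mmul J X2 Y2) p q" by (simp add: tens_app mmul_def)
  finally show "mmul (I \<times> J) (tens X1 X2) (tens Y1 Y2) p q = tens (mmul I X1 Y1) (mmul J X2 Y2) p q" .
qed

lemma mmul_sum_right:
  "mmul I X (\<lambda>p q. \<Sum>k\<in>F. G k p q) = (\<lambda>p q. \<Sum>k\<in>F. mmul I X (G k) p q)"
  unfolding mmul_def by (simp add: sum_distrib_left sum.swap[of _ I])

lemma mmul_sum_left:
  "mmul I (\<lambda>p q. \<Sum>k\<in>F. G k p q) X = (\<lambda>p q. \<Sum>k\<in>F. mmul I (G k) X p q)"
  unfolding mmul_def by (simp add: sum_distrib_right sum.swap[of _ I])

lemma spin_id: "spin m (1,0) j k = (if j = k \<and> k \<le> m then 1 else 0)"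
  by (simp add: spin_diag)

lemma qcnj_one: "qcnj (1,0) = (1,0)" by (simp add: qcnj_def)

lemma conjS_id:
  assumes "Y \<in> endsp {..m}"
  shows "conjS m (1,0) Y = Y"
proof (intro ext)
  fix i j
  have l: "mmul {..m} (spin m (1,0)) Y i j = (if i \<le> m then Y i j else 0)" for i j
  proof -
    have "(\<Sum>k\<le>m. spin m (1,0) i k * Y k j) = (\<Sum>k\<le>m. if k = i then Y i j else 0)"
      by (rule sum.cong) (auto simp: spin_id)
    then show ?thesis by (simp add: mmul_def)
  qed
  have "conjS m (1,0) Y i j = (\<Sum>k\<le>m. mmul {..m} (spin m (1,0)) Y i k * spin m (1,0) k j)"
    by (simp add: conjS_def qcnj_one mmul_def[of "{..m}" "mmul {..m} (spin m (1,0)) Y"])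
  also have "\<dots> = (\<Sum>k\<le>m. (if i \<le> m then Y i k else 0) * spin m (1,0) k j)"
    by (simp only: l)
  also have "\<dots> = (\<Sum>k\<le>m. if k = j then (if i \<le> m then Y i j else 0) else 0)"
    by (rule sum.cong) (auto simp: spin_id)
  also have "\<dots> = Y i j" using assms by (auto simp: endsp_def)
  finally show "conjS m (1,0) Y i j = Y i j" .
qed

lemma conjT_sum:
  assumes "\<forall>k\<in>F. Y k \<in> endsp {..m2}"
  shows "conjT m1 m2 u (1,0) (\<lambda>p q. \<Sum>k\<in>F. tens (X k) (Y k) p q)
       = (\<lambda>p q. \<Sum>k\<in>F. tens (conjS m1 u (X k)) (Y k) p q)"
proof -
  have "conjT m1 m2 u (1,0) (\<lambda>p q. \<Sum>k\<in>F. tens (X k) (Y k) p q)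
      = (\<lambda>p q. \<Sum>k\<in>F. tens (conjS m1 u (X k)) (conjS m2 (1,0) (Y k)) p q)"
    unfolding conjT_def mmul_sum_right mmul_sum_left mmul_tens conjS_def qcnj_one ..
  also have "\<dots> = (\<lambda>p q. \<Sum>k\<in>F. tens (conjS m1 u (X k)) (Y k) p q)"
    using assms conjS_id by (intro ext sum.cong) auto
  finally show ?thesis .
qed

lemma mvmul_ev: "k \<le> n \<Longrightarrow> mvmul {..n} A (ev k) = (\<lambda>j. A j k)"
proof (intro ext)
  fix j assume "k \<le> n"
  have "(\<Sum>i\<le>n. A j i * ev k i) = (\<Sum>i\<le>n. if i = k then A j k else 0)"
    by (rule sum.cong) (auto simp: ev_def)
  then show "mvmul {..n} A (ev k) j = A j k" using \<open>k \<le> n\<close> by (simp add: mvmul_def)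
qed

lemma vector_4:
  "vector [a,b,c,d] $ (1::4) = a" "vector [a,b,c,d] $ (2::4) = b"
  "vector [a,b,c,d] $ (3::4) = c" "vector [a,b,c,d] $ (4::4) = d"
  by (simp_all add: vector_def)

lemma rot4_torus:
  "rot4 (a,0) (1,0) y = vector [Re (a * Complex (y$1) (y$2)), Im (a * Complex (y$1) (y$2)),
      Re (cnj a * Complex (y$3) (y$4)), Im (cnj a * Complex (y$3) (y$4))]"
  by (simp add: rot4_def qmul_def qcnj_def of_R4_def to_R4_def)

lemma one_SU2: "(1,0) \<in> SU2" by (simp add: SU2_iff)

lemma swap_sum:
  fixes c :: "'j \<Rightarrow> 'k \<Rightarrow> complex"
  shows "(\<Sum>k\<in>F. (\<Sum>j\<in>G. c j k * X j) * Z k) = (\<Sum>j\<in>G. X j * (\<Sum>k\<in>F. c j k * Z k))"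
proof -
  have "(\<Sum>k\<in>F. (\<Sum>j\<in>G. c j k * X j) * Z k) = (\<Sum>k\<in>F. \<Sum>j\<in>G. X j * (c j k * Z k))"
    unfolding sum_distrib_right by (simp only: ac_simps)
  also have "\<dots> = (\<Sum>j\<in>G. \<Sum>k\<in>F. X j * (c j k * Z k))" by (rule sum.swap)
  also have "\<dots> = (\<Sum>j\<in>G. X j * (\<Sum>k\<in>F. c j k * Z k))" by (simp add: sum_distrib_left)
  finally show ?thesis .
qed

lemma decomp:
  assumes tl: "tlin n T1" and img: "T1 ` Vsp n = W1" and W2: "W2 \<subseteq> endsp {..m2}"
    and M: "M \<in> tspan W1 W2"
  shows "\<exists>Y. (\<forall>k. Y k \<in> endsp {..m2}) \<and> M = (\<lambda>p q. \<Sum>k\<le>n. tens (T1 (ev k)) (Y k) p q)"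
proof -
  have "\<exists>(Nt::nat) A B. (\<forall>t<Nt. A t \<in> W1 \<and> B t \<in> W2) \<and> M = (\<lambda>p q. \<Sum>t<Nt. tens (A t) (B t) p q)"
    using M by (simp add: tspan_def)
  then obtain Nt :: nat and A B where AB: "\<forall>t<Nt. A t \<in> W1 \<and> B t \<in> W2"
    and Meq: "M = (\<lambda>p q. \<Sum>t<Nt. tens (A t) (B t) p q)"
    by blast
  have "\<forall>t\<in>{..<Nt}. \<exists>x. x \<in> Vsp n \<and> T1 x = A t"
    using AB img by (force simp: image_iff)
  from bchoice[OF this] obtain x where x: "\<forall>t\<in>{..<Nt}. x t \<in> Vsp n \<and> T1 (x t) = A t"
    by blast
  define Y where "Y k = (\<lambda>r s. \<Sum>t<Nt. x t k * B t r s)" for k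
  have "Y k \<in> endsp {..m2}" for k
  proof -
    have "Y k i j = 0" if ij: "i \<notin> {..m2} \<or> j \<notin> {..m2}" for i j
    proof -
      have "B t i j = 0" if "t < Nt" for t
      proof -
        have "B t \<in> endsp {..m2}" using AB W2 that by blast
        then show ?thesis using ij unfolding endsp_def by blast
      qed
      then show ?thesis by (simp add: Y_def)
    qed
    then show ?thesis unfolding endsp_def by blast
  qed
  moreover have "M = (\<lambda>p q. \<Sum>k\<le>n. tens (T1 (ev k)) (Y k) p q)"
  proof (intro ext)
    fix p q
    have "M p q = (\<Sum>t<Nt. A t (fst p) (fst q) * B t (snd p) (snd q))"
      by (simp add: Meq tens_app)
    also have "\<dots> = (\<Sum>t<Nt. (\<Sum>k\<le>n. x t k * T1 (ev k) (fst p) (fst q)) * B t (snd p) (snd q))"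
    proof (rule sum.cong[OF refl])
      fix t assume "t \<in> {..<Nt}"
      then have "A t = T1 (x t)" "x t \<in> Vsp n" using x by auto
      then show "A t (fst p) (fst q) * B t (snd p) (snd q)
          = (\<Sum>k\<le>n. x t k * T1 (ev k) (fst p) (fst q)) * B t (snd p) (snd q)"
        using T_expand[OF tl] by simp
    qed
    also have "\<dots> = (\<Sum>k\<le>n. T1 (ev k) (fst p) (fst q) * (\<Sum>t<Nt. x t k * B t (snd p) (snd q)))"
      by (rule swap_sum[where c = "\<lambda>t k. x t k" for x, simplified])
    also have "\<dots> = (\<Sum>k\<le>n. tens (T1 (ev k)) (Y k) p q)" by (simp add: tens_app Y_def)
    finally show "M p q = (\<Sum>k\<le>n. tens (T1 (ev k)) (Y k) p q)" .
  qed
  ultimately show ?thesis by blast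
qed

lemma transform:
  assumes tl: "tlin n T1"
    and int: "\<forall>g\<in>SU2. \<forall>x\<in>Vsp n. T1 (mvmul {..n} (spin n g) x) = conjS m1 g (T1 x)"
    and u: "u \<in> SU2" and Y: "\<forall>k. Y k \<in> endsp {..m2}"
  shows "conjT m1 m2 u (1,0) (\<lambda>p q. \<Sum>k\<le>n. tens (T1 (ev k)) (Y k) p q)
       = (\<lambda>p q. \<Sum>j\<le>n. tens (T1 (ev j)) (\<lambda>r s. \<Sum>k\<le>n. spin n u j k * Y k r s) p q)"
proof -
  have cs: "conjS m1 u (T1 (ev k)) = (\<lambda>p q. \<Sum>j\<le>n. spin n u j k * T1 (ev j) p q)" if "k \<le> n" for k
  proof -
    have "T1 (mvmul {..n} (spin n u) (ev k)) = conjS m1 u (T1 (ev k))"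
      using int u ev_Vsp[OF that] by blast
    then have "conjS m1 u (T1 (ev k)) = T1 (mvmul {..n} (spin n u) (ev k))" by (rule sym)
    also have "\<dots> = (\<lambda>p q. \<Sum>j\<le>n. mvmul {..n} (spin n u) (ev k) j * T1 (ev j) p q)"
      by (rule T_expand[OF tl mvmul_Vsp])
    also have "\<dots> = (\<lambda>p q. \<Sum>j\<le>n. spin n u j k * T1 (ev j) p q)"
      using mvmul_ev[OF that] by simp
    finally show ?thesis .
  qed
  have "conjT m1 m2 u (1,0) (\<lambda>p q. \<Sum>k\<le>n. tens (T1 (ev k)) (Y k) p q)
      = (\<lambda>p q. \<Sum>k\<le>n. tens (conjS m1 u (T1 (ev k))) (Y k) p q)"
    by (rule conjT_sum) (use Y in blast)
  also have "\<dots> = (\<lambda>p q. \<Sum>j\<le>n. tens (T1 (ev j)) (\<lambda>r s. \<Sum>k\<le>n. spin n u j k * Y k r s) p q)"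
  proof (intro ext)
    fix p q
    have "(\<Sum>k\<le>n. tens (conjS m1 u (T1 (ev k))) (Y k) p q)
        = (\<Sum>k\<le>n. (\<Sum>j\<le>n. spin n u j k * T1 (ev j) (fst p) (fst q)) * Y k (snd p) (snd q))"
      by (rule sum.cong[OF refl]) (simp add: tens_app cs)
    also have "\<dots> = (\<Sum>j\<le>n. T1 (ev j) (fst p) (fst q) * (\<Sum>k\<le>n. spin n u j k * Y k (snd p) (snd q)))"
      by (rule swap_sum)
    also have "\<dots> = (\<Sum>j\<le>n. tens (T1 (ev j)) (\<lambda>r s. \<Sum>k\<le>n. spin n u j k * Y k r s) p q)"
      by (simp add: tens_app)
    finally show "(\<Sum>k\<le>n. tens (conjS m1 u (T1 (ev k))) (Y k) p q)
        = (\<Sum>j\<le>n. tens (T1 (ev j)) (\<lambda>r s. \<Sum>k\<le>n. spin n u j k * Y k r s) p q)" .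
  qed
  finally show ?thesis .
qed

lemma endsp_comb:
  assumes "\<forall>k. Y k \<in> endsp I"
  shows "(\<lambda>r s. \<Sum>k\<in>F. c k * Y k r s) \<in> endsp I"
  using assms by (simp add: endsp_def)

lemma infinite_reals: "infinite (UNIV :: real set)"
proof
  assume "finite (UNIV :: real set)"
  then have "finite {0..1::real}" by (rule finite_subset[OF subset_UNIV])
  then show False using infinite_Icc[of "0::real" 1] by simp
qed

lemma generic:
  assumes k0: "k0 \<le> n" and v: "v k0 \<noteq> 0"
  shows "\<exists>g\<in>SU2. (\<Sum>k\<le>n. spin n g n k * v k) \<noteq> 0"
proof -
  define Q where "Q = (\<Sum>k\<le>n. monom (v k) (n - k))"
  have "coeff Q (n - k0) = (\<Sum>k\<le>n. if k = k0 then v k0 else 0)"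
    unfolding Q_def coeff_sum
  proof (rule sum.cong[OF refl])
    fix k assume "k \<in> {..n}"
    then have "n - k = n - k0 \<longleftrightarrow> k = k0" using k0 by auto
    then show "coeff (monom (v k) (n - k)) (n - k0) = (if k = k0 then v k0 else 0)"
      by (simp add: coeff_monom)
  qed
  also have "\<dots> = v k0" using k0 by simp
  finally have "Q \<noteq> 0" using v by auto
  then have "finite {z. poly Q z = 0}" by (rule poly_roots_finite)
  then have "finite (of_real -` {z. poly Q z = 0} :: real set)"
    by (rule finite_vimageI) (rule inj_of_real)
  from ex_new_if_finite[OF infinite_reals this]
  obtain t :: real where t: "t \<notin> of_real -` {z. poly Q z = 0}" by (elim exE)
  then have Qt: "poly Q (complex_of_real t) \<noteq> 0" by simp
  define c where "c = 1 / sqrt (1 + t^2)"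
  have cpos: "c > 0" by (simp add: c_def add_pos_nonneg)
  have tp: "1 + t^2 > 0" by (simp add: add_pos_nonneg)
  have c2: "c^2 * (1 + t^2) = 1" using tp by (simp add: c_def power_divide)
  define a where "a = complex_of_real c"
  define b where "b = - complex_of_real (c * t)"
  have gSU: "(a,b) \<in> SU2"
  proof -
    have "(cmod a)^2 + (cmod b)^2 = c^2 + (c*t)^2"
      by (simp add: a_def b_def cmod_real2 del: of_real_mult)
    also have "\<dots> = c^2 * (1 + t^2)" by (simp add: power_mult_distrib distrib_left)
    also have "\<dots> = 1" by (rule c2)
    finally show ?thesis by (simp add: SU2_iff)
  qed
  have "(\<Sum>k\<le>n. spin n (a,b) n k * v k) = (\<Sum>k\<le>n. complex_of_real (c^n) * (v k * complex_of_real t ^ (n-k)))"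
  proof (rule sum.cong[OF refl])
    fix k assume "k \<in> {..n}"
    then have kn: "k \<le> n" by simp
    have "spin n (a,b) n k = complex_of_real c ^ k * complex_of_real (c*t) ^ (n-k)"
      using spin_top[OF kn] by (simp add: a_def b_def)
    also have "\<dots> = complex_of_real (c^n) * complex_of_real t ^ (n-k)"
    proof -
      have cn: "c^n = c^k * c^(n-k)" using kn by (simp flip: power_add)
      have "c^k * (c*t)^(n-k) = c^n * t^(n-k)"
        unfolding cn power_mult_distrib by (simp only: mult.assoc)
      then have "complex_of_real (c^k * (c*t)^(n-k)) = complex_of_real (c^n * t^(n-k))" by simp
      then show ?thesis by (simp only: of_real_mult of_real_power)
    qed
    finally show "spin n (a,b) n k * v k = complex_of_real (c^n) * (v k * complex_of_real t ^ (n-k))"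
      by simp
  qed
  also have "\<dots> = complex_of_real (c^n) * poly Q (complex_of_real t)"
    by (simp add: Q_def poly_sum poly_monom sum_distrib_left)
  finally have "(\<Sum>k\<le>n. spin n (a,b) n k * v k) \<noteq> 0" using Qt cpos by simp
  then show ?thesis using gSU by blast
qed

lemma Re_formula: "complex_of_real (Re w) = (w + cnj w) / 2"
  using complex_add_cnj[of w] by (simp add: field_simps)

lemma Im_formula: "complex_of_real (Im w) = (w - cnj w) / (2 * \<i>)"
  using complex_diff_cnj[of w] by (simp add: field_simps)

lemma rp_Re:
  assumes "a * w = x0" "a * cnj w = x1"
  shows "a * complex_of_real (Re w) = (x0 + x1) / 2"
  unfolding Re_formula using assms by (simp add: algebra_simps add_divide_distrib)

lemma rp_Im:
  assumes "a * w = x0" "a * cnj w = x1"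
  shows "a * complex_of_real (Im w) = (x0 - x1) / (2 * \<i>)"
  unfolding Im_formula using assms by (simp add: algebra_simps diff_divide_distrib)

lemma rp4:
  assumes a1: "cmod a = 1"
  shows "a * complex_of_real (Re (a * c)) = poly (monom (cnj c / 2) 0 + monom (c / 2) 2) a"
    "a * complex_of_real (Im (a * c)) = poly (monom (- cnj c / (2*\<i>)) 0 + monom (c / (2*\<i>)) 2) a"
    "a * complex_of_real (Re (cnj a * c)) = poly (monom (c / 2) 0 + monom (cnj c / 2) 2) a"
    "a * complex_of_real (Im (cnj a * c)) = poly (monom (c / (2*\<i>)) 0 + monom (- cnj c / (2*\<i>)) 2) a"
proof -
  have u: "a * cnj a = 1" by (rule unit_cnj[OF a1])
  have e1: "a * (a * c) = c * a^2" by (simp add: power2_eq_square)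
  have e2: "a * cnj (a * c) = cnj c" using u by (simp add: algebra_simps)
  have e3: "a * (cnj a * c) = c" using u by (simp add: algebra_simps)
  have e4: "a * cnj (cnj a * c) = cnj c * a^2" by (simp add: power2_eq_square)
  show "a * complex_of_real (Re (a * c)) = poly (monom (cnj c / 2) 0 + monom (c / 2) 2) a"
    unfolding rp_Re[OF e1 e2] by (simp add: poly_monom field_simps)
  show "a * complex_of_real (Im (a * c)) = poly (monom (- cnj c / (2*\<i>)) 0 + monom (c / (2*\<i>)) 2) a"
    unfolding rp_Im[OF e1 e2] by (simp add: poly_monom field_simps)
  show "a * complex_of_real (Re (cnj a * c)) = poly (monom (c / 2) 0 + monom (cnj c / 2) 2) a"
    unfolding rp_Re[OF e3 e4] by (simp add: poly_monom field_simps)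
  show "a * complex_of_real (Im (cnj a * c)) = poly (monom (c / (2*\<i>)) 0 + monom (- cnj c / (2*\<i>)) 2) a"
    unfolding rp_Im[OF e3 e4] by (simp add: poly_monom field_simps)
qed

lemma case4:
  fixes P :: "real^4 \<Rightarrow> nat\<times>nat \<Rightarrow> nat\<times>nat \<Rightarrow> complex"
  assumes W1: "Wl_sub m1 l W1" and W2: "Wl_sub m2 l W2" and hp: "hom_poly d P"
    and nz: "\<exists>y. P y \<noteq> (\<lambda>i j. 0)" and inT: "\<forall>y. P y \<in> tspan W1 W2"
    and eqv: "\<forall>u\<in>SU2. \<forall>v\<in>SU2. \<forall>y. P (rot4 u v y) = conjT m1 m2 u v (P y)"
  shows "2*l \<le> d \<and> even (d - 2*l)"
proof -
  define n where "n = 2*l"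
  obtain T1 where bij: "bij_betw T1 (Vsp n) W1" and tl: "tlin n T1"
    and int: "\<forall>g\<in>SU2. \<forall>x\<in>Vsp n. T1 (mvmul {..n} (spin n g) x) = conjS m1 g (T1 x)"
    using Wl_obtain[OF W1] unfolding n_def by blast
  have inj: "inj_on T1 (Vsp n)" using bij_betw_imp_inj_on[OF bij] .
  have img: "T1 ` Vsp n = W1" using bij_betw_imp_surj_on[OF bij] .
  have W2e: "W2 \<subseteq> endsp {..m2}" using W2 unfolding Wl_sub_def by blast
  define N where "N k = T1 (ev k)" for k
  obtain y0 where y0: "P y0 \<noteq> (\<lambda>i j. 0)" using nz by blast
  obtain Y where Y: "\<forall>k. Y k \<in> endsp {..m2}" and M0: "P y0 = (\<lambda>p q. \<Sum>k\<le>n. tens (N k) (Y k) p q)"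
    using decomp[OF tl img W2e, of "P y0"] inT unfolding N_def by blast
  have "\<exists>k0 r s. k0 \<le> n \<and> Y k0 r s \<noteq> 0"
  proof (rule ccontr)
    assume "\<not> (\<exists>k0 r s. k0 \<le> n \<and> Y k0 r s \<noteq> 0)"
    then have z: "\<And>k r s. k \<le> n \<Longrightarrow> Y k r s = 0" by blast
    have "P y0 p q = 0" for p q
      unfolding M0 by (rule sum.neutral) (simp add: tens_app z)
    then have "P y0 = (\<lambda>i j. 0)" by (intro ext) simp
    with y0 show False by simp
  qed
  then obtain k0 r s where k0: "k0 \<le> n" "Y k0 r s \<noteq> 0" by blast
  obtain g where g: "g \<in> SU2" "(\<Sum>k\<le>n. spin n g n k * Y k r s) \<noteq> 0"
    using generic[OF k0(1), of "\<lambda>k. Y k r s"] k0(2) by blast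
  define Y' where "Y' j = (\<lambda>r s. \<Sum>k\<le>n. spin n g j k * Y k r s)" for j
  have Y'e: "\<forall>j. Y' j \<in> endsp {..m2}" using endsp_comb[OF Y] by (simp add: Y'_def)
  define y1 where "y1 = rot4 g (1,0) y0"
  have M1: "P y1 = (\<lambda>p q. \<Sum>j\<le>n. tens (N j) (Y' j) p q)"
  proof -
    have "P y1 = conjT m1 m2 g (1,0) (P y0)" using eqv g(1) one_SU2 by (simp add: y1_def)
    also have "\<dots> = (\<lambda>p q. \<Sum>j\<le>n. tens (N j) (Y' j) p q)"
      unfolding M0 N_def Y'_def by (rule transform[OF tl int g(1) Y])
    finally show ?thesis .
  qed
  have Y'top: "Y' n r s \<noteq> 0" using g(2) by (simp add: Y'_def)
  have "N n \<noteq> (\<lambda>p q. 0)" unfolding N_def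
    using T_zero_iff[OF tl inj ev_Vsp[of n n]] by (auto simp: ev_def fun_eq_iff)
  have "\<exists>p q. N n p q \<noteq> 0"
  proof (rule ccontr)
    assume "\<not> (\<exists>p q. N n p q \<noteq> 0)"
    then have "N n = (\<lambda>p q. 0)" by (intro ext) simp
    then show False using \<open>N n \<noteq> (\<lambda>p q. 0)\<close> by simp
  qed
  then obtain p1 q1 where p1: "N n p1 q1 \<noteq> 0" by blast
  define p where "p = (p1, r)"
  define q where "q = (q1, s)"
  have key: "a^n * P (rot4 (a,0) (1,0) y1) p q = (\<Sum>j\<le>n. (N j p1 q1 * Y' j r s) * a^(2*j))"
    if a1: "cmod a = 1" for a
  proof -
    have aSU: "(a,0) \<in> SU2" by (rule torus_SU2[OF a1])
    have "P (rot4 (a,0) (1,0) y1) = conjT m1 m2 (a,0) (1,0) (P y1)" using eqv aSU one_SU2 by blast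
    also have "\<dots> = (\<lambda>p q. \<Sum>j\<le>n. tens (N j) (\<lambda>r s. \<Sum>k\<le>n. spin n (a,0) j k * Y' k r s) p q)"
      unfolding M1 N_def by (rule transform[OF tl int aSU Y'e])
    finally have "P (rot4 (a,0) (1,0) y1) p q = (\<Sum>j\<le>n. N j p1 q1 * (\<Sum>k\<le>n. spin n (a,0) j k * Y' k r s))"
      by (simp add: tens_app p_def q_def)
    then have "a^n * P (rot4 (a,0) (1,0) y1) p q = (\<Sum>j\<le>n. a^n * (N j p1 q1 * (\<Sum>k\<le>n. spin n (a,0) j k * Y' k r s)))"
      by (simp add: sum_distrib_left)
    also have "\<dots> = (\<Sum>j\<le>n. (N j p1 q1 * Y' j r s) * a^(2*j))"
    proof (rule sum.cong[OF refl])
      fix j assume "j \<in> {..n}"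
      then have jn: "j \<le> n" by simp
      have "(\<Sum>k\<le>n. spin n (a,0) j k * Y' k r s) = a^j * cnj a^(n-j) * Y' j r s"
        using mvmul_diag[OF jn, of a "\<lambda>k. Y' k r s"] by (simp add: mvmul_def)
      moreover have "a^n * (a^j * cnj a^(n-j)) = a^(2*j)" by (rule torus_pow[OF a1 jn])
      ultimately show "a^n * (N j p1 q1 * (\<Sum>k\<le>n. spin n (a,0) j k * Y' k r s)) = (N j p1 q1 * Y' j r s) * a^(2*j)"
        by (metis (no_types, lifting) mult.assoc mult.commute)
    qed
    finally show ?thesis .
  qed
  define c1 where "c1 = Complex (y1$1) (y1$2)"
  define c2 where "c2 = Complex (y1$3) (y1$4)"
  define L :: "4 \<Rightarrow> complex poly" where "L k = (if k = 1 then monom (cnj c1 / 2) 0 + monom (c1 / 2) 2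
      else if k = 2 then monom (- cnj c1 / (2*\<i>)) 0 + monom (c1 / (2*\<i>)) 2
      else if k = 3 then monom (c2 / 2) 0 + monom (cnj c2 / 2) 2
      else monom (c2 / (2*\<i>)) 0 + monom (- cnj c2 / (2*\<i>)) 2)" for k
  have L1: "L 1 = monom (cnj c1 / 2) 0 + monom (c1 / 2) 2" by (simp add: L_def)
  have L2: "L 2 = monom (- cnj c1 / (2*\<i>)) 0 + monom (c1 / (2*\<i>)) 2" by (simp add: L_def)
  have L3: "L 3 = monom (c2 / 2) 0 + monom (cnj c2 / 2) 2" by (simp add: L_def)
  have L4: "L 4 = monom (c2 / (2*\<i>)) 0 + monom (- cnj c2 / (2*\<i>)) 2" by (simp add: L_def)
  have gL: "\<forall>k. good 2 1 (L k)" using good_lin by (simp add: L_def)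
  obtain R where R: "good 2 d R" "\<forall>a y. (\<forall>k. a^1 * complex_of_real (y$k) = poly (L k) a)
              \<longrightarrow> a^(1*d) * P y p q = poly R a"
    using hom_polyR[OF hp gL] by blast
  have Lk: "\<forall>k. a^1 * complex_of_real (rot4 (a,0) (1,0) y1 $ k) = poly (L k) a" if a1: "cmod a = 1" for a
    unfolding forall_4 rot4_torus vector_4 power_one_right c1_def[symmetric] c2_def[symmetric]
      L1 L2 L3 L4 rp4[OF a1] by (intro conjI refl)
  have "\<forall>a. cmod a = 1 \<longrightarrow> a^n * poly R a = a^d * (\<Sum>j\<le>n. (N j p1 q1 * Y' j r s) * a^(2*j))"
  proof (intro allI impI)
    fix a :: complex assume a1: "cmod a = 1"
    have "a^n * poly R a = a^n * (a^d * P (rot4 (a,0) (1,0) y1) p q)" using R(2) Lk[OF a1] by simp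
    also have "\<dots> = a^d * (a^n * P (rot4 (a,0) (1,0) y1) p q)" by (simp add: algebra_simps)
    also have "\<dots> = a^d * (\<Sum>j\<le>n. (N j p1 q1 * Y' j r s) * a^(2*j))" using key[OF a1] by simp
    finally show "a^n * poly R a = a^d * (\<Sum>j\<le>n. (N j p1 q1 * Y' j r s) * a^(2*j))" .
  qed
  from freq[OF this R(1)] have "n \<le> d + 2*n \<and> 2 dvd (d + 2*n - n) \<and> d + 2*n - n \<le> 2*d"
    using p1 Y'top by simp
  then have "2*l \<le> d" "even (d + 2*l)" unfolding n_def by (auto simp: add.commute)
  then show ?thesis by presburger
qed

theorem proposition4p3:
  shows
  "(\<forall>(mu::nat) (l::nat) (d::nat) (P :: real^3 \<Rightarrow> nat \<Rightarrow> nat \<Rightarrow> complex) W.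
      l \<le> 2 * mu \<and> Wl_sub (2 * mu) l W \<and>
      hom_poly d P \<and> (\<exists>y. P y \<noteq> (\<lambda>i j. 0)) \<and> (\<forall>y. P y \<in> W) \<and>
      (\<forall>u\<in>SU2. \<forall>y. P (rot3 u y) = conjS (2 * mu) u (P y))
      \<longrightarrow> l \<le> d \<and> even (d - l))
 \<and> (\<forall>(m1::nat) (m2::nat) (l::nat) (d::nat)
      (P :: real^4 \<Rightarrow> nat\<times>nat \<Rightarrow> nat\<times>nat \<Rightarrow> complex) W1 W2.
      even (m1 + m2) \<and> l \<le> min m1 m2 \<and> Wl_sub m1 l W1 \<and> Wl_sub m2 l W2 \<and>
      hom_poly d P \<and> (\<exists>y. P y \<noteq> (\<lambda>i j. 0)) \<and> (\<forall>y. P y \<in> tspan W1 W2) \<and>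
      (\<forall>u\<in>SU2. \<forall>v\<in>SU2. \<forall>y. P (rot4 u v y) = conjT m1 m2 u v (P y))
      \<longrightarrow> 2 * l \<le> d \<and> even (d - 2 * l))"
proof (intro conjI)
  show "\<forall>(mu::nat) (l::nat) (d::nat) (P :: real^3 \<Rightarrow> nat \<Rightarrow> nat \<Rightarrow> complex) W.
      l \<le> 2 * mu \<and> Wl_sub (2 * mu) l W \<and>
      hom_poly d P \<and> (\<exists>y. P y \<noteq> (\<lambda>i j. 0)) \<and> (\<forall>y. P y \<in> W) \<and>
      (\<forall>u\<in>SU2. \<forall>y. P (rot3 u y) = conjS (2 * mu) u (P y))
      \<longrightarrow> l \<le> d \<and> even (d - l)"
    by (intro allI impI, elim conjE, rule case3) assumption+
  show "\<forall>(m1::nat) (m2::nat) (l::nat) (d::nat)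
      (P :: real^4 \<Rightarrow> nat\<times>nat \<Rightarrow> nat\<times>nat \<Rightarrow> complex) W1 W2.
      even (m1 + m2) \<and> l \<le> min m1 m2 \<and> Wl_sub m1 l W1 \<and> Wl_sub m2 l W2 \<and>
      hom_poly d P \<and> (\<exists>y. P y \<noteq> (\<lambda>i j. 0)) \<and> (\<forall>y. P y \<in> tspan W1 W2) \<and>
      (\<forall>u\<in>SU2. \<forall>v\<in>SU2. \<forall>y. P (rot4 u v y) = conjT m1 m2 u v (P y))
      \<longrightarrow> 2 * l \<le> d \<and> even (d - 2 * l)"
    by (intro allI impI, elim conjE, rule case4) assumption+
qed

end
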